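(* Let $D=\{(x^i,y^i)\}_{i=1}^n$ be a training set and $JJ=\{JJ_{x^i}\}_{i=1}^n$ a collection of substructure sets such that $D$ is linearly separable with respect to $JJ$ with margin $\delta^{JJ}>0$, and let $R^{JJ}$ be the mixed assignment radius of $D$ with respect to $JJ$. Run the SWVP algorithm on $D$ with these substructure sets, and suppose that at every update the weights $\gamma$ returned by $\textsc{SetGamma}$ satisfy the $\gamma$ selection conditions (1) and (2) with respect to the current weight vector. Then the total number $t$ of updates made by SWVP satisfies $$t\le \frac{(R^{JJ})^2}{(\delta^{JJ})^2}.$$ In particular, SWVP terminates (converges to a parameter vector making no further updates on $D$).
   Context: Structured prediction setting: for each input $x$ the output space is $\mathcal{Y}(x)=D_Y^{L_x}$ (vectors of length $L_x$ over a finite domain $D_Y$), and a feature map $\phi(x,y')\in\mathbb{R}^d$ is given for $y'\in\mathcal{Y}(x)$. Write $\Delta\phi(x,y,z)=\phi(x,y)-\phi(x,z)$ and $[n]=\{1,\dots,n\}$. The training set is $D=\{(x^i,y^i)\}_{i=1}^n$ with $y^i\in\mathcal{Y}(x^i)$. Mixed assignment: for $y^*,y\in\mathcal{Y}(x)$ and $J\subseteq[L_x]$, $m^J(y^*,y)\in\mathcal{Y}(x)$ has $k$-th coordinate $y^*_k$ if $k\in J$ and $y_k$ otherwise. For each training example a substructure set $JJ_{x^i}\subseteq 2^{[L_{x^i}]}$ is fixed. SWVP algorithm: initialize $\mathbf{w}=0$; repeatedly cycle through the examples $(x,y)\in D$; for each, compute $y^*=\arg\max_{y'\in\mathcal{Y}(x)}\mathbf{w}\cdot\phi(x,y')$.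 If $y^*\ne y$, write $m^J=m^J(y^*,y)$, let $I=\{J\in JJ_x: m^J\neq y\}$, $I^v=\{J\in I:\mathbf{w}\cdot\Delta\phi(x,y,m^J)\le 0\}$, $I^{nv}=\{J\in I:\mathbf{w}\cdot\Delta\phi(x,y,m^J)>0\}$ (so $I=I^v\cup I^{nv}$), obtain weights $\gamma(m^J)$, $J\in I$, from a procedure $\textsc{SetGamma}$, and perform the update $\mathbf{w}\leftarrow\mathbf{w}+\sum_{J\in I}\gamma(m^J)\Delta\phi(x,y,m^J)$. Stop when a full pass makes no update. $\gamma$ selection conditions (for the current $\mathbf{w}$, before the update): (1) $\gamma(m^J)\ge0$ for all $J\in I$ and $\sum_{J\in I}\gamma(m^J)=1$; (2) $\mathbf{w}\cdot\sum_{J\in I}\gamma(m^J)\Delta\phi(x,y,m^J)\le 0$. $D$ is linearly separable with respect to $JJ$ with margin $\delta^{JJ}>0$ if there is $\mathbf{u}\in\mathbb{R}^d$ with $\|\mathbf{u}\|_2=1$ such that $\mathbf{u}\cdot\Delta\phi(x^i,y^i,m^J(z,y^i))\ge\delta^{JJ}$ for all $i$, all $z\in\mathcal{Y}(x^i)$ and all $J\in JJ_{x^i}$ with $m^J(z,y^i)\ne y^i$. The mixed assignment radius with respect to $JJ$ is a constant $R^{JJ}$ such that $\|\Delta\phi(x^i,y^i,m^J(z,y^i))\|\le R^{JJ}$ for all $i$, $z\in\mathcal{Y}(x^i)$, $J\in JJ_{x^i}$. *)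

theory Defs
  imports "HOL-Analysis.Analysis"
begin

text \<open>Output space Y(x) = D_Y^{L_x}: lists of length L x over the finite domain DY.
  Positions are indexed 0-based: [L_x] is rendered as {0..<L_x}.\<close>
definition outputs :: "'a set \<Rightarrow> nat \<Rightarrow> 'a list set" where
  "outputs DY l = {ys. length ys = l \<and> set ys \<subseteq> DY}"

definition mixed :: "nat set \<Rightarrow> 'a list \<Rightarrow> 'a list \<Rightarrow> 'a list" where
  "mixed J ystar y = map (\<lambda>k. if k \<in> J then ystar ! k else y ! k) [0..<length y]"

definition dphi :: "('x \<Rightarrow> 'a list \<Rightarrow> 'v::real_vector) \<Rightarrow> 'x \<Rightarrow> 'a list \<Rightarrow> 'a list \<Rightarrow> 'v" where
  "dphi phi x y z = phi x y - phi x z"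

definition is_argmax ::
  "('x \<Rightarrow> 'a list \<Rightarrow> 'v::real_inner) \<Rightarrow> 'a set \<Rightarrow> ('x \<Rightarrow> nat) \<Rightarrow> 'v \<Rightarrow> 'x \<Rightarrow> 'a list \<Rightarrow> bool" where
  "is_argmax phi DY L w x ys \<longleftrightarrow>
     ys \<in> outputs DY (L x) \<and> (\<forall>y' \<in> outputs DY (L x). w \<bullet> phi x y' \<le> w \<bullet> phi x ys)"

definition upd_set :: "nat set set \<Rightarrow> 'a list \<Rightarrow> 'a list \<Rightarrow> nat set set" where
  "upd_set JJx ystar y = {J \<in> JJx. mixed J ystar y \<noteq> y}"

definition gamma_conditions ::
  "('x \<Rightarrow> 'a list \<Rightarrow> 'v::real_inner) \<Rightarrow> 'x \<Rightarrow> 'a list \<Rightarrow> 'a list \<Rightarrow> nat set set \<Rightarrow> 'v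
    \<Rightarrow> ('a list \<Rightarrow> real) \<Rightarrow> bool" where
  "gamma_conditions phi x y ystar JJx w gam \<longleftrightarrow>
     (\<forall>J \<in> upd_set JJx ystar y. gam (mixed J ystar y) \<ge> 0) \<and>
     (\<Sum>J \<in> upd_set JJx ystar y. gam (mixed J ystar y)) = 1 \<and>
     w \<bullet> (\<Sum>J \<in> upd_set JJx ystar y. gam (mixed J ystar y) *\<^sub>R dphi phi x y (mixed J ystar y)) \<le> 0"

text \<open>Linear separability of D w.r.t. JJ with margin delta.  Example i is D ! i, JJ i = JJ_{x^i}.\<close>
definition separable_margin ::
  "('x \<Rightarrow> 'a list \<Rightarrow> 'v::real_inner) \<Rightarrow> 'a set \<Rightarrow> ('x \<Rightarrow> nat) \<Rightarrow> ('x \<times> 'a list) list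
    \<Rightarrow> (nat \<Rightarrow> nat set set) \<Rightarrow> real \<Rightarrow> bool" where
  "separable_margin phi DY L D JJ \<delta> \<longleftrightarrow>
     (\<exists>u. norm u = 1 \<and>
        (\<forall>i < length D. \<forall>z \<in> outputs DY (L (fst (D ! i))). \<forall>J \<in> JJ i.
           mixed J z (snd (D ! i)) \<noteq> snd (D ! i) \<longrightarrow>
           u \<bullet> dphi phi (fst (D ! i)) (snd (D ! i)) (mixed J z (snd (D ! i))) \<ge> \<delta>))"

definition mixed_radius ::
  "('x \<Rightarrow> 'a list \<Rightarrow> 'v::real_inner) \<Rightarrow> 'a set \<Rightarrow> ('x \<Rightarrow> nat) \<Rightarrow> ('x \<times> 'a list) list
    \<Rightarrow> (nat \<Rightarrow> nat set set) \<Rightarrow> real \<Rightarrow> bool" where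
  "mixed_radius phi DY L D JJ R \<longleftrightarrow>
     (\<forall>i < length D. \<forall>z \<in> outputs DY (L (fst (D ! i))). \<forall>J \<in> JJ i.
        norm (dphi phi (fst (D ! i)) (snd (D ! i)) (mixed J z (snd (D ! i)))) \<le> R)"

text \<open>One visit of SWVP: the k-th visit (0-based) processes example k mod n (cyclic order).
  w is the weight vector before the visit, ys the computed argmax y*, gam the weights
  returned by SetGamma (only relevant if an update happens), w' the weight vector after.\<close>
definition swvp_visit ::
  "('x \<Rightarrow> 'a list \<Rightarrow> 'v::real_inner) \<Rightarrow> 'a set \<Rightarrow> ('x \<Rightarrow> nat) \<Rightarrow> ('x \<times> 'a list) list
    \<Rightarrow> (nat \<Rightarrow> nat set set) \<Rightarrow> 'v \<Rightarrow> nat \<Rightarrow> 'a list \<Rightarrow> ('a list \<Rightarrow> real) \<Rightarrow> 'v \<Rightarrow> bool" where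
  "swvp_visit phi DY L D JJ w k ys gam w' \<longleftrightarrow>
     (let i = k mod length D; x = fst (D ! i); y = snd (D ! i) in
       is_argmax phi DY L w x ys \<and>
       (if ys = y then w' = w
        else gamma_conditions phi x y ys (JJ i) w gam \<and>
             w' = w + (\<Sum>J \<in> upd_set (JJ i) ys y. gam (mixed J ys y) *\<^sub>R dphi phi x y (mixed J ys y))))"

definition is_update :: "('x \<times> 'a list) list \<Rightarrow> (nat \<Rightarrow> 'a list) \<Rightarrow> nat \<Rightarrow> bool" where
  "is_update D ys k \<longleftrightarrow> ys k \<noteq> snd (D ! (k mod length D))"

definition stopped :: "('x \<times> 'a list) list \<Rightarrow> (nat \<Rightarrow> 'a list) \<Rightarrow> nat \<Rightarrow> bool" where
  "stopped D ys k \<longleftrightarrow>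
     (\<exists>p. Suc p * length D \<le> k \<and>
          (\<forall>j \<in> {p * length D ..< Suc p * length D}. \<not> is_update D ys j))"

text \<open>ws, ys, gam describe an execution of SWVP performing (at least) K visits:
  ws k is the weight vector before visit k, ys k the argmax, gam k the SetGamma output.\<close>
definition swvp_run ::
  "('x \<Rightarrow> 'a list \<Rightarrow> 'v::real_inner) \<Rightarrow> 'a set \<Rightarrow> ('x \<Rightarrow> nat) \<Rightarrow> ('x \<times> 'a list) list
    \<Rightarrow> (nat \<Rightarrow> nat set set) \<Rightarrow> (nat \<Rightarrow> 'v) \<Rightarrow> (nat \<Rightarrow> 'a list) \<Rightarrow> (nat \<Rightarrow> 'a list \<Rightarrow> real)
    \<Rightarrow> nat \<Rightarrow> bool" where
  "swvp_run phi DY L D JJ ws ys gam K \<longleftrightarrow>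
     ws 0 = 0 \<and>
     (\<forall>k < K. \<not> stopped D ys k \<and>
        swvp_visit phi DY L D JJ (ws k) k (ys k) (gam k) (ws (Suc k)))"

definition num_updates :: "('x \<times> 'a list) list \<Rightarrow> (nat \<Rightarrow> 'a list) \<Rightarrow> nat \<Rightarrow> nat" where
  "num_updates D ys K = card {k. k < K \<and> is_update D ys k}"

end

theory Submission
  imports Defs
begin

lemma step_bounds:
  fixes phi :: "'x \<Rightarrow> 'a list \<Rightarrow> 'v::euclidean_space"
  assumes fin: "finite I"
    and g0: "\<forall>J\<in>I. gam (f J) \<ge> 0" and g1: "(\<Sum>J\<in>I. gam (f J)) = 1"
    and gw: "w \<bullet> (\<Sum>J\<in>I. gam (f J) *\<^sub>R d J) \<le> 0"
    and ud: "\<forall>J\<in>I. u \<bullet> d J \<ge> \<delta>"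
    and nd: "\<forall>J\<in>I. norm (d J) \<le> R"
  shows "u \<bullet> (w + (\<Sum>J\<in>I. gam (f J) *\<^sub>R d J)) \<ge> u \<bullet> w + \<delta>"
    and "(norm (w + (\<Sum>J\<in>I. gam (f J) *\<^sub>R d J)))\<^sup>2 \<le> (norm w)\<^sup>2 + R\<^sup>2"
proof -
  let ?v = "\<Sum>J\<in>I. gam (f J) *\<^sub>R d J"
  have "u \<bullet> ?v = (\<Sum>J\<in>I. gam (f J) * (u \<bullet> d J))"
    by (simp add: inner_sum_right)
  also have "\<dots> \<ge> (\<Sum>J\<in>I. gam (f J) * \<delta>)"
    by (rule sum_mono) (use g0 ud in \<open>auto intro: mult_left_mono\<close>)
  moreover have "(\<Sum>J\<in>I. gam (f J) * \<delta>) = \<delta>" using g1 by (simp add: sum_distrib_right[symmetric])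
  ultimately show "u \<bullet> (w + ?v) \<ge> u \<bullet> w + \<delta>" by (simp add: inner_add_right)
  have "norm ?v \<le> (\<Sum>J\<in>I. norm (gam (f J) *\<^sub>R d J))" by (rule norm_sum)
  also have "\<dots> = (\<Sum>J\<in>I. gam (f J) * norm (d J))"
    by (rule sum.cong) (use g0 in auto)
  also have "\<dots> \<le> (\<Sum>J\<in>I. gam (f J) * R)"
    by (rule sum_mono) (use g0 nd in \<open>auto intro: mult_left_mono\<close>)
  also have "\<dots> = R" using g1 by (simp add: sum_distrib_right[symmetric])
  finally have nv: "norm ?v \<le> R" .
  have "(norm ?v)\<^sup>2 \<le> R\<^sup>2" using nv norm_ge_zero[of ?v] power_mono by blast
  moreover have "(norm (w + ?v))\<^sup>2 = (norm w)\<^sup>2 + 2 * (w \<bullet> ?v) + (norm ?v)\<^sup>2"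
    by (simp add: power2_norm_eq_inner inner_add inner_commute)
  ultimately show "(norm (w + ?v))\<^sup>2 \<le> (norm w)\<^sup>2 + R\<^sup>2" using gw by linarith
qed

lemma num_updates_Suc:
  "num_updates D ys (Suc k) = num_updates D ys k + (if is_update D ys k then 1 else 0)"
proof -
  have "{j. j < Suc k \<and> is_update D ys j} =
        {j. j < k \<and> is_update D ys j} \<union> (if is_update D ys k then {k} else {})"
    by (auto simp: less_Suc_eq)
  then show ?thesis unfolding num_updates_def by auto
qed

lemma run_mono: "swvp_run phi DY L D JJ ws ys gam K \<Longrightarrow> K' \<le> K \<Longrightarrow> swvp_run phi DY L D JJ ws ys gam K'"
  unfolding swvp_run_def by auto

theorem theorem1:
  fixes phi :: "'x \<Rightarrow> 'a list \<Rightarrow> 'v::euclidean_space"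
    and DY :: "'a set" and L :: "'x \<Rightarrow> nat"
    and D :: "('x \<times> 'a list) list" and JJ :: "nat \<Rightarrow> nat set set"
    and \<delta> R :: real
  assumes "finite DY"
    and "D \<noteq> []"
    and "\<forall>i < length D. snd (D ! i) \<in> outputs DY (L (fst (D ! i)))"
    and "\<forall>i < length D. JJ i \<subseteq> Pow {..<L (fst (D ! i))}"
    and "\<delta> > 0"
    and "separable_margin phi DY L D JJ \<delta>"
    and "mixed_radius phi DY L D JJ R"
  shows "(\<forall>ws ys gam K. swvp_run phi DY L D JJ ws ys gam K \<longrightarrow>
            real (num_updates D ys K) \<le> R\<^sup>2 / \<delta>\<^sup>2)
       \<and> (\<forall>ws ys gam. \<exists>K. \<not> swvp_run phi DY L D JJ ws ys gam K)"
proof -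
  obtain u where nu: "norm u = 1" and usep: "\<forall>i < length D. \<forall>z \<in> outputs DY (L (fst (D ! i))). \<forall>J \<in> JJ i.
           mixed J z (snd (D ! i)) \<noteq> snd (D ! i) \<longrightarrow>
           u \<bullet> dphi phi (fst (D ! i)) (snd (D ! i)) (mixed J z (snd (D ! i))) \<ge> \<delta>"
    using assms(6) unfolding separable_margin_def by blast
  have rad: "\<forall>i < length D. \<forall>z \<in> outputs DY (L (fst (D ! i))). \<forall>J \<in> JJ i.
        norm (dphi phi (fst (D ! i)) (snd (D ! i)) (mixed J z (snd (D ! i)))) \<le> R"
    using assms(7) unfolding mixed_radius_def by blast
  have inv: "u \<bullet> ws k \<ge> \<delta> * num_updates D ys k \<and> (norm (ws k))\<^sup>2 \<le> R\<^sup>2 * num_updates D ys k"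
    if run: "swvp_run phi DY L D JJ ws ys gam K" and kK: "k \<le> K" for ws ys gam K k
    using kK
  proof (induction k)
    case 0
    then show ?case using run by (simp add: swvp_run_def num_updates_def)
  next
    case (Suc k)
    then have IH: "u \<bullet> ws k \<ge> \<delta> * num_updates D ys k" "(norm (ws k))\<^sup>2 \<le> R\<^sup>2 * num_updates D ys k"
      by auto
    have kK: "k < K" using Suc by auto
    define i where "i = k mod length D"
    have il: "i < length D" using assms(2) by (simp add: i_def)
    define x where "x = fst (D ! i)"
    define y where "y = snd (D ! i)"
    have vis: "swvp_visit phi DY L D JJ (ws k) k (ys k) (gam k) (ws (Suc k))"
      using run kK unfolding swvp_run_def by blast
    have am: "is_argmax phi DY L (ws k) x (ys k)"
      using vis unfolding swvp_visit_def Let_def i_def x_def by auto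
    show ?case
    proof (cases "ys k = y")
      case True
      then have "ws (Suc k) = ws k" using vis unfolding swvp_visit_def Let_def i_def y_def by auto
      moreover have "\<not> is_update D ys k" using True unfolding is_update_def y_def i_def by simp
      ultimately show ?thesis using IH by (simp add: num_updates_Suc)
    next
      case False
      let ?I = "upd_set (JJ i) (ys k) y"
      have gc: "gamma_conditions phi x y (ys k) (JJ i) (ws k) (gam k)"
        and wS: "ws (Suc k) = ws k + (\<Sum>J \<in> ?I. gam k (mixed J (ys k) y) *\<^sub>R dphi phi x y (mixed J (ys k) y))"
        using vis False unfolding swvp_visit_def Let_def i_def[symmetric] x_def[symmetric] y_def[symmetric]
        by auto
      have "finite (JJ i)"
        using assms(4) il by (meson finite_Pow_iff finite_lessThan finite_subset)
      then have fin: "finite ?I" unfolding upd_set_def by simp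
      have ysO: "ys k \<in> outputs DY (L x)" using am unfolding is_argmax_def by simp
      let ?f = "\<lambda>J. mixed J (ys k) y"
      let ?d = "\<lambda>J. dphi phi x y (mixed J (ys k) y)"
      have g0: "\<forall>J\<in>?I. gam k (?f J) \<ge> 0" and g1: "(\<Sum>J\<in>?I. gam k (?f J)) = 1"
        and gw: "ws k \<bullet> (\<Sum>J\<in>?I. gam k (?f J) *\<^sub>R ?d J) \<le> 0"
        using gc unfolding gamma_conditions_def by auto
      have ud: "\<forall>J\<in>?I. u \<bullet> ?d J \<ge> \<delta>"
        using usep il ysO unfolding upd_set_def x_def y_def by blast
      have nd: "\<forall>J\<in>?I. norm (?d J) \<le> R"
        using rad il ysO unfolding upd_set_def x_def y_def by blast
      have st: "u \<bullet> ws (Suc k) \<ge> u \<bullet> ws k + \<delta>" "(norm (ws (Suc k)))\<^sup>2 \<le> (norm (ws k))\<^sup>2 + R\<^sup>2"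
        unfolding wS using step_bounds[where f="?f" and gam="gam k" and d="?d", OF fin g0 g1 gw ud nd] by auto
      have upd: "is_update D ys k" using False unfolding is_update_def y_def i_def by simp
      show ?thesis using IH st upd by (simp add: num_updates_Suc algebra_simps)
    qed
  qed
  have bound: "real (num_updates D ys K) \<le> R\<^sup>2 / \<delta>\<^sup>2"
    if run: "swvp_run phi DY L D JJ ws ys gam K" for ws ys gam K
  proof -
    let ?c = "real (num_updates D ys K)"
    from inv[OF run order_refl]
    have a: "u \<bullet> ws K \<ge> \<delta> * ?c" and b: "(norm (ws K))\<^sup>2 \<le> R\<^sup>2 * ?c" by auto
    have "u \<bullet> ws K \<le> norm (ws K)" using norm_cauchy_schwarz[of u "ws K"] nu by simp
    with a have "\<delta> * ?c \<le> norm (ws K)" by linarith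
    moreover have "0 \<le> \<delta> * ?c" using assms(5) by simp
    ultimately have "(\<delta> * ?c)\<^sup>2 \<le> (norm (ws K))\<^sup>2" using power_mono by blast
    with b have c: "\<delta>\<^sup>2 * ?c * ?c \<le> R\<^sup>2 * ?c" by (simp add: power2_eq_square algebra_simps)
    show ?thesis
    proof (cases "?c = 0")
      case True then show ?thesis by simp
    next
      case False
      then have "?c > 0" by simp
      with c have "\<delta>\<^sup>2 * ?c \<le> R\<^sup>2" by (simp add: mult.commute mult_le_cancel_left_pos)
      then show ?thesis using assms(5) by (simp add: field_simps mult.commute)
    qed
  qed
  have termi: "\<exists>K. \<not> swvp_run phi DY L D JJ ws ys gam K" for ws ys gam
  proof (rule ccontr)
    assume "\<nexists>K. \<not> swvp_run phi DY L D JJ ws ys gam K"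
    then have allrun: "\<And>K. swvp_run phi DY L D JJ ws ys gam K" by blast
    define n where "n = length D"
    have n0: "n > 0" using assms(2) n_def by simp
    define N where "N = nat \<lceil>R\<^sup>2 / \<delta>\<^sup>2\<rceil>"
    define M where "M = (N + 1) * n"
    have "real (num_updates D ys M) \<le> R\<^sup>2 / \<delta>\<^sup>2" by (rule bound[OF allrun])
    then have cM: "num_updates D ys M \<le> N" unfolding N_def by linarith
    have "\<exists>p < N + 1. \<forall>j \<in> {p * n ..< Suc p * n}. \<not> is_update D ys j"
    proof (rule ccontr)
      assume "\<not> ?thesis"
      then have "\<forall>p < N + 1. \<exists>j. j \<in> {p * n ..< Suc p * n} \<and> is_update D ys j" by blast
      then obtain g where g: "\<And>p. p < N + 1 \<Longrightarrow> g p \<in> {p * n ..< Suc p * n} \<and> is_update D ys (g p)"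
        by metis
      have inj: "inj_on g {..<N+1}"
      proof (rule inj_onI)
        fix p q assume "p \<in> {..<N+1}" "q \<in> {..<N+1}" "g p = g q"
        then have gp: "p * n \<le> g p" "g p < Suc p * n" "q * n \<le> g q" "g q < Suc q * n"
          using g[of p] g[of q] by auto
        have "g p div n = p" by (rule div_nat_eqI) (use gp in \<open>simp_all add: mult.commute\<close>)
        moreover have "g q div n = q" by (rule div_nat_eqI) (use gp in \<open>simp_all add: mult.commute\<close>)
        ultimately show "p = q" using \<open>g p = g q\<close> by metis
      qed
      have sub: "g ` {..<N+1} \<subseteq> {k. k < M \<and> is_update D ys k}"
      proof
        fix k assume "k \<in> g ` {..<N+1}"
        then obtain p where p: "p < N + 1" "k = g p" by auto
        have "Suc p * n \<le> M" unfolding M_def using p(1) by (intro mult_right_mono) auto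
        then show "k \<in> {k. k < M \<and> is_update D ys k}" using g[OF p(1)] p(2) by auto
      qed
      have "N + 1 = card (g ` {..<N+1})" using card_image[OF inj] by simp
      also have "\<dots> \<le> num_updates D ys M" unfolding num_updates_def
        by (rule card_mono[OF _ sub]) simp
      finally show False using cM by simp
    qed
    then obtain p where p: "p < N + 1" "\<forall>j \<in> {p * n ..< Suc p * n}. \<not> is_update D ys j" by blast
    have "Suc p * n \<le> M" unfolding M_def using p(1) by (intro mult_right_mono) auto
    then have stp: "stopped D ys M" using p unfolding stopped_def n_def by blast
    from allrun[of "Suc M"] have "\<not> stopped D ys M" unfolding swvp_run_def by blast
    with stp show False by blast
  qed
  show ?thesis using bound termi by blast
qed

end
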